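(* Let $n\ge1$, $k\in\{1,\dots,n\}$, $b>0$, $\bm d\in\mathbb R^n$ with $d_i>0$ for all $i$, $\tilde{\bm a}\in\mathbb R^n$, and let $Y\subseteq\mathbb R^n$ be nonempty. Consider $$\xi=\min_{\bm y\in Y}\ \tilde{\bm a}^\top\bm y+\max_{(\bm x,\bm z)\in\mathbb R^n\times[0,1]^n}\Big\{\bm x^\top\bm y:\ \sum_{i=1}^n\frac{(d_ix_i)^2}{z_i}\le b,\ \sum_{i=1}^nz_i\le k\Big\}.$$ For $\bm y\in\mathbb R^n$, let $(1),\dots,(n)$ be a permutation of $\{1,\dots,n\}$ with $(y_{(1)}/d_{(1)})^2\ge\cdots\ge(y_{(n)}/d_{(n)})^2$ and let $s(\bm y)=\sum_{i=1}^k(y_{(i)}/d_{(i)})^2$. Then $$\xi=\min_{\bm y\in Y}\ \tilde{\bm a}^\top\bm y+\sqrt{b\,s(\bm y)},$$ and moreover $\xi$ equals the optimal value of $$\min_{\bm y,\bm t,\lambda,\mu}\ \tilde{\bm a}^\top\bm y+\lambda b+\mu k+\sum_{i=1}^nt_i\quad\text{s.t.}\quad (y_i/d_i)^2\le4(t_i+\mu)\lambda\ (i=1,\dots,n),\ \bm y\in Y,\ \bm t\in\mathbb R^n_+,\ \lambda\ge0,\ \mu\ge0$$ (with "min" understood as infimum where needed).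
   Context: Division convention: $a/b=0$ if $a=b=0$, and $a/b=+\infty$ if $b=0$ and $a\ne0$, so the constraint $\sum_i (d_ix_i)^2/z_i\le b$ forces $x_i=0$ whenever $z_i=0$. *)

theory Defs
  imports "HOL-Analysis.Analysis" "HOL-Library.Extended_Real"
begin

text \<open>Vectors in R^n are represented as functions nat => real; only the
coordinates 1..n are relevant.\<close>

definition cdiv :: "real \<Rightarrow> real \<Rightarrow> ereal" where
  "cdiv a c = (if c = 0 then (if a = 0 then 0 else \<infinity>) else ereal (a / c))"

definition inner_feasible :: "nat \<Rightarrow> nat \<Rightarrow> real \<Rightarrow> (nat \<Rightarrow> real) \<Rightarrow> (nat \<Rightarrow> real) \<Rightarrow> (nat \<Rightarrow> real) \<Rightarrow> bool" where
  "inner_feasible n k b d x z \<longleftrightarrow>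
     (\<forall>i\<in>{1..n}. 0 \<le> z i \<and> z i \<le> 1) \<and>
     (\<Sum>i=1..n. cdiv ((d i * x i)\<^sup>2) (z i)) \<le> ereal b \<and>
     (\<Sum>i=1..n. z i) \<le> real k"

definition inner_max :: "nat \<Rightarrow> nat \<Rightarrow> real \<Rightarrow> (nat \<Rightarrow> real) \<Rightarrow> (nat \<Rightarrow> real) \<Rightarrow> ereal" where
  "inner_max n k b d y =
     (SUP xz \<in> {(x, z). inner_feasible n k b d x z}. ereal (\<Sum>i=1..n. fst xz i * y i))"

definition sorting_perm :: "nat \<Rightarrow> (nat \<Rightarrow> real) \<Rightarrow> (nat \<Rightarrow> real) \<Rightarrow> (nat \<Rightarrow> nat) \<Rightarrow> bool" where
  "sorting_perm n d y p \<longleftrightarrow> p permutes {1..n} \<and>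
     (\<forall>i\<in>{1..n}. \<forall>j\<in>{1..n}. i \<le> j \<longrightarrow> (y (p j) / d (p j))\<^sup>2 \<le> (y (p i) / d (p i))\<^sup>2)"

definition s_val :: "nat \<Rightarrow> nat \<Rightarrow> (nat \<Rightarrow> real) \<Rightarrow> (nat \<Rightarrow> real) \<Rightarrow> real" where
  "s_val n k d y = (let p = (SOME p. sorting_perm n d y p) in
     (\<Sum>i=1..k. (y (p i) / d (p i))\<^sup>2))"

end

theory Submission imports Defs begin

lemma sort_perm_exists:
  fixes f :: "nat \<Rightarrow> real"
  shows "\<exists>p. p permutes {1..n} \<and> (\<forall>i\<in>{1..n}. \<forall>j\<in>{1..n}. i \<le> j \<longrightarrow> f (p j) \<le> f (p i))"
proof -
  define xs where "xs = sort_key (\<lambda>i. - f i) [1..<n+1]"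
  have len: "length xs = n" by (simp add: xs_def)
  have dist: "distinct xs" by (simp add: xs_def)
  have st: "set xs = {1..n}" by (auto simp add: xs_def)
  have so: "sorted (map (\<lambda>i. - f i) xs)" by (simp add: xs_def)
  define p where "p i = (if i \<in> {1..n} then xs ! (i - 1) else i)" for i
  have bn: "bij_betw ((!) xs) {..<n} {1..n}"
    using bij_betw_nth[OF dist] len st by simp
  have bm: "bij_betw (\<lambda>i. i - 1) {1..n} {..<n}"
    by (rule bij_betw_byWitness[where f'="\<lambda>i. i + 1"]) auto
  have "bij_betw ((!) xs \<circ> (\<lambda>i. i - 1)) {1..n} {1..n}"
    using bij_betw_trans[OF bm bn] .
  then have "bij_betw p {1..n} {1..n}"
    by (rule bij_betw_cong[THEN iffD1, rotated]) (simp add: p_def)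
  then have perm: "p permutes {1..n}"
    by (rule bij_imp_permutes) (auto simp add: p_def)
  have "f (p j) \<le> f (p i)" if "i \<in> {1..n}" "j \<in> {1..n}" "i \<le> j" for i j
  proof -
    have "(map (\<lambda>i. - f i) xs) ! (i - 1) \<le> (map (\<lambda>i. - f i) xs) ! (j - 1)"
      using sorted_nth_mono[OF so, of "i-1" "j-1"] that len by simp
    then show ?thesis using that len by (simp add: p_def)
  qed
  with perm show ?thesis by blast
qed

lemma amgm_term:
  fixes x y d z lam :: real
  assumes "lam > 0" "d > 0" "z \<ge> 0" "z = 0 \<longrightarrow> x = 0"
  shows "x * y \<le> lam * ((d * x)\<^sup>2 / z) + z * (y / d)\<^sup>2 / (4 * lam)"
proof (cases "z = 0")
  case True then show ?thesis using assms by simp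
next
  case False
  then have z: "z > 0" using assms by simp
  define u where "u = d * x"
  define v where "v = y / d"
  have xy: "x * y = u * v" using assms(2) by (simp add: u_def v_def)
  have "lam * (u\<^sup>2 / z) + z * v\<^sup>2 / (4 * lam) - u * v = (2 * lam * u - z * v)\<^sup>2 / (4 * lam * z)"
    using z assms(1) by (simp add: field_simps power2_eq_square)
  also have "\<dots> \<ge> 0" using z assms(1) by simp
  finally show ?thesis using xy by (simp add: u_def v_def)
qed

lemma amgm2:
  fixes lam b S :: real
  assumes "lam > 0" "b > 0" "S \<ge> 0"
  shows "sqrt (b * S) \<le> lam * b + S / (4 * lam)"
proof -
  define X where "X = lam * b + S / (4 * lam)"
  have X: "X \<ge> 0" using assms by (simp add: X_def)
  have "X\<^sup>2 - b * S = (lam * b - S / (4 * lam))\<^sup>2"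
    using assms(1) by (simp add: X_def field_simps power2_eq_square)
  then have "b * S \<le> X\<^sup>2" by (metis diff_ge_0_iff_ge zero_le_power2)
  then have "sqrt (b * S) \<le> sqrt (X\<^sup>2)" by (rule real_sqrt_le_mono)
  then show ?thesis using X by (simp add: X_def)
qed

lemma lam_choice:
  fixes b S :: real
  assumes "b > 0" "S > 0"
  shows "sqrt (b * S) / (2 * b) > 0 \<and> sqrt (b * S) / (2 * b) * b + S / (4 * (sqrt (b * S) / (2 * b))) = sqrt (b * S)"
proof -
  define r where "r = sqrt (b * S)"
  have r: "r > 0" using assms by (simp add: r_def)
  have r2: "r * r = b * S" using assms by (simp add: r_def)
  have "S / (4 * (r / (2 * b))) = (b * S) / (2 * r)" using assms r by (simp add: field_simps)
  also have "\<dots> = r / 2" using r r2 by (simp add: field_simps)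
  finally have "r / (2 * b) * b + S / (4 * (r / (2 * b))) = r" using assms by simp
  then show ?thesis using r assms unfolding r_def[symmetric] by simp
qed

context
  fixes n k :: nat and b :: real and d y :: "nat \<Rightarrow> real"
  assumes kk: "k \<in> {1..n}" and bb: "0 < b" and dd: "\<forall>i\<in>{1..n}. d i > 0"
begin

definition pp where "pp = (SOME p. sorting_perm n d y p)"
definition ww where "ww i = (y i / d i)\<^sup>2" for i

lemma pp_sort: "sorting_perm n d y pp"
proof -
  have "\<exists>p. sorting_perm n d y p"
    using sort_perm_exists[of n "\<lambda>i. (y i / d i)\<^sup>2"] unfolding sorting_perm_def by blast
  then show ?thesis unfolding pp_def by (rule someI_ex)
qed

lemma pp_perm: "pp permutes {1..n}"
  using pp_sort by (simp add: sorting_perm_def)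

lemma pp_mono: "i \<in> {1..n} \<Longrightarrow> j \<in> {1..n} \<Longrightarrow> i \<le> j \<Longrightarrow> ww (pp j) \<le> ww (pp i)"
  using pp_sort by (simp add: sorting_perm_def ww_def)

lemma S_eq: "s_val n k d y = (\<Sum>j=1..k. ww (pp j))"
  by (simp add: s_val_def pp_def ww_def Let_def)

lemma ww_nn: "0 \<le> ww i" by (simp add: ww_def)

lemma S_nn: "0 \<le> s_val n k d y"
  unfolding S_eq by (simp add: sum_nonneg ww_nn)

lemma pp_in: "j \<in> {1..n} \<Longrightarrow> pp j \<in> {1..n}"
  using permutes_in_image[OF pp_perm] by blast

lemma sum_pp: "(\<Sum>i=1..n. g i) = (\<Sum>j=1..n. g (pp j))"
  using sum.reindex_bij_betw[OF permutes_imp_bij[OF pp_perm], of g] by simp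

lemma topk_le:
  assumes "0 \<le> mu" "\<forall>i\<in>{1..n}. 0 \<le> t i" "\<forall>i\<in>{1..n}. c * ww i \<le> t i + mu"
  shows "c * s_val n k d y \<le> mu * real k + (\<Sum>i=1..n. t i)"
proof -
  have "c * s_val n k d y = (\<Sum>j=1..k. c * ww (pp j))"
    by (simp add: S_eq sum_distrib_left)
  also have "\<dots> \<le> (\<Sum>j=1..k. t (pp j) + mu)"
    apply (rule sum_mono) using assms(3) pp_in kk by auto
  also have "\<dots> = (\<Sum>j=1..k. t (pp j)) + mu * real k"
    by (simp add: sum.distrib)
  also have "(\<Sum>j=1..k. t (pp j)) \<le> (\<Sum>j=1..n. t (pp j))"
    apply (rule sum_mono2) using kk assms(2) pp_in by auto
  also have "(\<Sum>j=1..n. t (pp j)) = (\<Sum>i=1..n. t i)"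
    by (rule sum_pp[symmetric])
  finally show ?thesis by simp
qed

lemma thr:
  "(\<Sum>i=1..n. max 0 (ww i - ww (pp k))) = s_val n k d y - real k * ww (pp k)"
proof -
  let ?th = "ww (pp k)"
  have "(\<Sum>i=1..n. max 0 (ww i - ?th)) = (\<Sum>j=1..n. max 0 (ww (pp j) - ?th))"
    by (rule sum_pp)
  also have "(\<Sum>j=1..n. max 0 (ww (pp j) - ?th))
     = (\<Sum>j=1..k. max 0 (ww (pp j) - ?th)) + (\<Sum>j=Suc k..n. max 0 (ww (pp j) - ?th))"
  proof -
    have e: "{1..n} = {1..k} \<union> {Suc k..n}" using kk by auto
    show ?thesis unfolding e by (rule sum.union_disjoint) auto
  qed
  also have "(\<Sum>j=1..k. max 0 (ww (pp j) - ?th)) = (\<Sum>j=1..k. ww (pp j) - ?th)"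
    apply (rule sum.cong) using pp_mono kk by auto
  also have "(\<Sum>j=Suc k..n. max 0 (ww (pp j) - ?th)) = 0"
    apply (rule sum.neutral) using pp_mono kk by force
  finally show ?thesis by (simp add: sum_subtractf S_eq)
qed

lemma primal_le:
  assumes "\<forall>i\<in>{1..n}. 0 \<le> z i \<and> z i \<le> 1" "(\<Sum>i=1..n. z i) \<le> real k"
  shows "(\<Sum>i=1..n. z i * ww i) \<le> s_val n k d y"
proof -
  let ?th = "ww (pp k)"
  have th: "0 \<le> ?th" by (rule ww_nn)
  have "(\<Sum>i=1..n. z i * ww i) \<le> (\<Sum>i=1..n. z i * ?th + max 0 (ww i - ?th))"
  proof (rule sum_mono)
    fix i assume i: "i \<in> {1..n}"
    have "z i * (ww i - ?th) \<le> max 0 (ww i - ?th)"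
    proof (cases "ww i \<ge> ?th")
      case True
      then show ?thesis using assms(1) i mult_left_le_one_le[of "ww i - ?th" "z i"] by auto
    next
      case False
      then show ?thesis using assms(1) i by (simp add: mult_nonneg_nonpos)
    qed
    then show "z i * ww i \<le> z i * ?th + max 0 (ww i - ?th)" by (simp add: algebra_simps)
  qed
  also have "\<dots> = (\<Sum>i=1..n. z i) * ?th + (s_val n k d y - real k * ?th)"
    using thr by (simp add: sum.distrib sum_distrib_right)
  also have "\<dots> \<le> real k * ?th + (s_val n k d y - real k * ?th)"
    using assms(2) th by (simp add: mult_right_mono)
  finally show ?thesis by simp
qed

lemma S0:
  assumes "s_val n k d y = 0"
  shows "\<forall>i\<in>{1..n}. ww i = 0"
proof
  fix i assume i: "i \<in> {1..n}"
  have "i \<in> pp ` {1..n}" using permutes_image[OF pp_perm] i by simp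
  then obtain j where j: "j \<in> {1..n}" "i = pp j" by auto
  have "ww (pp j) \<le> ww (pp 1)" using pp_mono[of 1 j] j kk by auto
  also have "ww (pp 1) \<le> (\<Sum>j=1..k. ww (pp j))"
    by (rule member_le_sum) (use kk ww_nn in auto)
  finally show "ww i = 0" using assms j ww_nn[of i] by (simp add: S_eq)
qed


lemma feas_facts:
  assumes "inner_feasible n k b d x z"
  shows "\<forall>i\<in>{1..n}. z i = 0 \<longrightarrow> x i = 0" and "(\<Sum>i=1..n. (d i * x i)\<^sup>2 / z i) \<le> b"
proof -
  have sb: "(\<Sum>i=1..n. cdiv ((d i * x i)\<^sup>2) (z i)) \<le> ereal b"
    using assms by (auto simp: inner_feasible_def)
  have nf: "\<forall>i\<in>{1..n}. cdiv ((d i * x i)\<^sup>2) (z i) \<noteq> \<infinity>"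
  proof (rule ccontr)
    assume "\<not> (\<forall>i\<in>{1..n}. cdiv ((d i * x i)\<^sup>2) (z i) \<noteq> \<infinity>)"
    then have "(\<Sum>i=1..n. cdiv ((d i * x i)\<^sup>2) (z i)) = \<infinity>" using sum_Pinfty by auto
    with sb show False by simp
  qed
  have ce: "\<forall>i\<in>{1..n}. cdiv ((d i * x i)\<^sup>2) (z i) = ereal ((d i * x i)\<^sup>2 / z i)"
    using nf by (auto simp: cdiv_def split: if_splits)
  show "\<forall>i\<in>{1..n}. z i = 0 \<longrightarrow> x i = 0"
  proof (intro ballI impI)
    fix i assume i: "i \<in> {1..n}" and "z i = 0"
    then have "(d i * x i)\<^sup>2 = 0" using nf by (auto simp: cdiv_def split: if_splits)
    moreover have "d i > 0" using dd i by blast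
    ultimately show "x i = 0" by simp
  qed
  have "(\<Sum>i=1..n. cdiv ((d i * x i)\<^sup>2) (z i)) = (\<Sum>i=1..n. ereal ((d i * x i)\<^sup>2 / z i))"
    by (rule sum.cong) (use ce in auto)
  then show "(\<Sum>i=1..n. (d i * x i)\<^sup>2 / z i) \<le> b" using sb by simp
qed

lemma y0:
  assumes "s_val n k d y = 0" "i \<in> {1..n}"
  shows "y i = 0"
proof -
  have "d i > 0" using dd assms(2) by blast
  then show ?thesis using S0[OF assms(1)] assms(2) by (auto simp: ww_def)
qed

lemma ind_sum:
  "(\<Sum>i=1..n. if i \<in> pp ` {1..k} then g i else 0) = (\<Sum>j=1..k. g (pp j))"
proof -
  have sub: "pp ` {1..k} \<subseteq> {1..n}" using pp_in kk by auto
  have "(\<Sum>i=1..n. if i \<in> pp ` {1..k} then g i else 0) = sum g ({1..n} \<inter> pp ` {1..k})"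
    by (rule sum.inter_restrict[symmetric]) simp
  also have "{1..n} \<inter> pp ` {1..k} = pp ` {1..k}" using sub by auto
  also have "sum g (pp ` {1..k}) = (\<Sum>j=1..k. g (pp j))"
    by (rule sum.reindex[unfolded comp_def]) (rule permutes_inj_on[OF pp_perm])
  finally show ?thesis .
qed

lemma inner_ub:
  assumes "inner_feasible n k b d x z"
  shows "(\<Sum>i=1..n. x i * y i) \<le> sqrt (b * s_val n k d y)"
proof -
  let ?S = "s_val n k d y"
  have zx: "\<forall>i\<in>{1..n}. z i = 0 \<longrightarrow> x i = 0" and sb: "(\<Sum>i=1..n. (d i * x i)\<^sup>2 / z i) \<le> b"
    using feas_facts[OF assms] by auto
  have z: "\<forall>i\<in>{1..n}. 0 \<le> z i \<and> z i \<le> 1" and zs: "(\<Sum>i=1..n. z i) \<le> real k"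
    using assms by (auto simp: inner_feasible_def)
  show ?thesis
  proof (cases "?S = 0")
    case True
    then have "(\<Sum>i=1..n. x i * y i) = 0" using y0 by (intro sum.neutral) auto
    then show ?thesis using True by simp
  next
    case False
    then have Sp: "?S > 0" using S_nn by (simp add: order_le_less)
    define lam where "lam = sqrt (b * ?S) / (2 * b)"
    have lam: "lam > 0" "lam * b + ?S / (4 * lam) = sqrt (b * ?S)"
      using lam_choice[OF bb Sp] unfolding lam_def by auto
    have "(\<Sum>i=1..n. x i * y i) \<le> (\<Sum>i=1..n. lam * ((d i * x i)\<^sup>2 / z i) + z i * ww i / (4 * lam))"
      apply (rule sum_mono) unfolding ww_def using amgm_term lam(1) dd z zx by auto
    also have "\<dots> = lam * (\<Sum>i=1..n. (d i * x i)\<^sup>2 / z i) + (\<Sum>i=1..n. z i * ww i) / (4 * lam)"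
      by (simp add: sum.distrib sum_distrib_left sum_divide_distrib)
    also have "\<dots> \<le> lam * b + ?S / (4 * lam)"
      apply (rule add_mono)
       apply (rule mult_left_mono[OF sb]) using lam apply simp
      apply (rule divide_right_mono) using primal_le z zs lam by auto
    finally show ?thesis using lam by simp
  qed
qed

lemma inner_wit:
  "\<exists>x z. inner_feasible n k b d x z \<and> (\<Sum>i=1..n. x i * y i) = sqrt (b * s_val n k d y)"
proof (cases "s_val n k d y = 0")
  case True
  have "inner_feasible n k b d (\<lambda>_. 0) (\<lambda>_. 0)" using bb by (auto simp: inner_feasible_def cdiv_def)
  then show ?thesis using True by auto
next
  case False
  let ?S = "s_val n k d y"
  let ?A = "pp ` {1..k}"
  have Sp: "?S > 0" using False S_nn by (simp add: order_le_less)
  define c where "c = sqrt (b / ?S)"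
  define z where "z i = (if i \<in> ?A then 1 else 0 :: real)" for i
  define x where "x i = c * z i * y i / (d i)\<^sup>2" for i
  have cd: "cdiv ((d i * x i)\<^sup>2) (z i) = ereal (c\<^sup>2 * (if i \<in> ?A then ww i else 0))"
    if i: "i \<in> {1..n}" for i
  proof (cases "i \<in> ?A")
    case True
    have "(d i * x i)\<^sup>2 = c\<^sup>2 * ww i" using dd i True
      by (simp add: x_def z_def ww_def field_simps power2_eq_square)
    then show ?thesis using True by (simp add: cdiv_def z_def)
  next
    case False
    then show ?thesis by (simp add: cdiv_def z_def x_def)
  qed
  have "(\<Sum>i=1..n. cdiv ((d i * x i)\<^sup>2) (z i)) = (\<Sum>i=1..n. ereal (c\<^sup>2 * (if i \<in> ?A then ww i else 0)))"
    by (rule sum.cong) (use cd in auto)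
  also have "\<dots> = ereal (c\<^sup>2 * ?S)"
    using ind_sum[of ww] by (simp add: sum_distrib_left[symmetric] S_eq)
  also have "c\<^sup>2 * ?S = b" using Sp bb by (simp add: c_def)
  finally have f1: "(\<Sum>i=1..n. cdiv ((d i * x i)\<^sup>2) (z i)) \<le> ereal b" by simp
  have f2: "(\<Sum>i=1..n. z i) = real k"
    unfolding z_def using ind_sum[of "\<lambda>_. 1::real"] kk by simp
  have feas: "inner_feasible n k b d x z"
    unfolding inner_feasible_def using f1 f2 by (auto simp: z_def)
  have "(\<Sum>i=1..n. x i * y i) = (\<Sum>i=1..n. c * (if i \<in> ?A then ww i else 0))"
    apply (rule sum.cong) using dd by (auto simp: x_def z_def ww_def field_simps power2_eq_square)
  also have "\<dots> = c * ?S" using ind_sum[of ww] by (simp add: sum_distrib_left[symmetric] S_eq)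
  also have "\<dots> = sqrt (b * ?S)"
  proof -
    have "c * ?S = sqrt (b / ?S) * (sqrt ?S * sqrt ?S)" using Sp by (simp add: c_def)
    also have "\<dots> = sqrt (b * ?S)" using Sp by (simp add: real_sqrt_divide real_sqrt_mult field_simps)
    finally show ?thesis .
  qed
  finally show ?thesis using feas by blast
qed

lemma inner_max_eq: "inner_max n k b d y = ereal (sqrt (b * s_val n k d y))"
proof -
  obtain x z where w: "inner_feasible n k b d x z" "(\<Sum>i=1..n. x i * y i) = sqrt (b * s_val n k d y)"
    using inner_wit by blast
  show ?thesis unfolding inner_max_def
  proof (rule antisym)
    show "(SUP xz\<in>{(x, z). inner_feasible n k b d x z}. ereal (\<Sum>i = 1..n. fst xz i * y i)) \<le> ereal (sqrt (b * s_val n k d y))"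
    proof (rule SUP_least)
      fix xz assume "xz \<in> {(x, z). inner_feasible n k b d x z}"
      then obtain x z where "xz = (x, z)" "inner_feasible n k b d x z" by auto
      then show "ereal (\<Sum>i = 1..n. fst xz i * y i) \<le> ereal (sqrt (b * s_val n k d y))"
        using inner_ub[of x z] by simp
    qed
    show "ereal (sqrt (b * s_val n k d y)) \<le> (SUP xz\<in>{(x, z). inner_feasible n k b d x z}. ereal (\<Sum>i = 1..n. fst xz i * y i))"
      by (rule SUP_upper2[of "(x, z)"]) (use w in auto)
  qed
qed

lemma dual_lb:
  assumes "\<forall>i\<in>{1..n}. t i \<ge> 0" "lam \<ge> 0" "mu \<ge> 0"
    "\<forall>i\<in>{1..n}. (y i / d i)\<^sup>2 \<le> 4 * (t i + mu) * lam"
  shows "sqrt (b * s_val n k d y) \<le> lam * b + mu * real k + (\<Sum>i=1..n. t i)"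
proof (cases "lam = 0")
  case True
  then have "\<forall>i\<in>{1..n}. ww i = 0" using assms(4) ww_nn by (auto simp: ww_def intro: antisym)
  then have "s_val n k d y = 0" unfolding S_eq using pp_in kk by (intro sum.neutral) auto
  moreover have "0 \<le> mu * real k + (\<Sum>i=1..n. t i)" using assms by (intro add_nonneg_nonneg mult_nonneg_nonneg sum_nonneg) auto
  ultimately show ?thesis using True by simp
next
  case False
  then have lp: "lam > 0" using assms(2) by simp
  have "\<forall>i\<in>{1..n}. (1 / (4 * lam)) * ww i \<le> t i + mu"
  proof
    fix i assume i: "i \<in> {1..n}"
    then have h: "ww i \<le> 4 * (t i + mu) * lam" using assms(4) unfolding ww_def by blast
    have "(1 / (4 * lam)) * ww i \<le> (1 / (4 * lam)) * (4 * (t i + mu) * lam)"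
      using h lp by (intro mult_left_mono) auto
    also have "\<dots> = t i + mu" using lp by simp
    finally show "(1 / (4 * lam)) * ww i \<le> t i + mu" .
  qed
  then have "(1 / (4 * lam)) * s_val n k d y \<le> mu * real k + (\<Sum>i=1..n. t i)"
    using topk_le assms by blast
  moreover have "sqrt (b * s_val n k d y) \<le> lam * b + s_val n k d y / (4 * lam)"
    by (rule amgm2[OF lp bb S_nn])
  ultimately show ?thesis by simp
qed

lemma dual_att:
  "\<exists>t lam mu. (\<forall>i\<in>{1..n}. t i \<ge> 0) \<and> lam \<ge> 0 \<and> mu \<ge> 0 \<and>
     (\<forall>i\<in>{1..n}. (y i / d i)\<^sup>2 \<le> 4 * (t i + mu) * lam) \<and>
     lam * b + mu * real k + (\<Sum>i=1..n. t i) = sqrt (b * s_val n k d y)"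
proof (cases "s_val n k d y = 0")
  case True
  then show ?thesis using S0[OF True]
    by (intro exI[of _ "\<lambda>_. 0"] exI[of _ 0]) (auto simp: ww_def)
next
  case False
  let ?S = "s_val n k d y"
  let ?th = "ww (pp k)"
  have Sp: "?S > 0" using False S_nn by (simp add: order_le_less)
  define lam where "lam = sqrt (b * ?S) / (2 * b)"
  have lam: "lam > 0" "lam * b + ?S / (4 * lam) = sqrt (b * ?S)"
    using lam_choice[OF bb Sp] unfolding lam_def by auto
  define mu where "mu = ?th / (4 * lam)"
  define t where "t i = max 0 (ww i - ?th) / (4 * lam)" for i
  have c1: "\<forall>i\<in>{1..n}. t i \<ge> 0" using lam by (simp add: t_def)
  have c2: "mu \<ge> 0" using lam ww_nn by (simp add: mu_def)
  have c3: "(y i / d i)\<^sup>2 \<le> 4 * (t i + mu) * lam" for i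
  proof -
    have "4 * (t i + mu) * lam = max 0 (ww i - ?th) + ?th" using lam by (simp add: t_def mu_def field_simps)
    then show ?thesis by (simp add: ww_def)
  qed
  have "mu * real k + (\<Sum>i=1..n. t i) = (real k * ?th + (\<Sum>i=1..n. max 0 (ww i - ?th))) / (4 * lam)"
    by (simp add: t_def mu_def sum_divide_distrib add_divide_distrib)
  also have "\<dots> = ?S / (4 * lam)" using thr lam by simp
  finally have "lam * b + mu * real k + (\<Sum>i=1..n. t i) = sqrt (b * ?S)" using lam by simp
  then show ?thesis using c1 c2 c3 lam by (intro exI[of _ t] exI[of _ lam] exI[of _ mu]) auto
qed

end
theorem proposition6:
  fixes n k :: nat and b :: real and d a :: "nat \<Rightarrow> real" and Y :: "(nat \<Rightarrow> real) set"
  assumes "1 \<le> n" and "k \<in> {1..n}" and "b > 0"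
    and "\<forall>i\<in>{1..n}. d i > 0"
    and "Y \<noteq> {}"
    and "Y \<subseteq> {y. \<forall>i. i \<notin> {1..n} \<longrightarrow> y i = 0}"
  shows "(INF y\<in>Y. ereal (\<Sum>i=1..n. a i * y i) + inner_max n k b d y)
           = (INF y\<in>Y. ereal ((\<Sum>i=1..n. a i * y i) + sqrt (b * s_val n k d y)))
       \<and> (INF y\<in>Y. ereal (\<Sum>i=1..n. a i * y i) + inner_max n k b d y)
           = (INF ytlm \<in> {(y, t, lam, mu). y \<in> Y \<and> (\<forall>i\<in>{1..n}. t i \<ge> 0) \<and> lam \<ge> 0 \<and> mu \<ge> 0 \<and>
                   (\<forall>i\<in>{1..n}. (y i / d i)\<^sup>2 \<le> 4 * (t i + mu) * lam)}.
                case ytlm of (y, t, lam, mu) \<Rightarrow>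
                  ereal ((\<Sum>i=1..n. a i * y i) + lam * b + mu * real k + (\<Sum>i=1..n. t i)))"
proof -
  note A = assms(2) assms(3) assms(4)
  have IM: "\<And>y. inner_max n k b d y = ereal (sqrt (b * s_val n k d y))"
    using inner_max_eq[OF A] by blast
  have e1: "(INF y\<in>Y. ereal (\<Sum>i=1..n. a i * y i) + inner_max n k b d y)
           = (INF y\<in>Y. ereal ((\<Sum>i=1..n. a i * y i) + sqrt (b * s_val n k d y)))"
    by (simp add: IM)
  let ?G = "{(y, t, lam, mu). y \<in> Y \<and> (\<forall>i\<in>{1..n}. t i \<ge> 0) \<and> lam \<ge> 0 \<and> mu \<ge> 0 \<and>
                   (\<forall>i\<in>{1..n}. (y i / d i)\<^sup>2 \<le> 4 * (t i + mu) * lam)} ::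
      ((nat \<Rightarrow> real) \<times> (nat \<Rightarrow> real) \<times> real \<times> real) set"
  let ?g = "\<lambda>ytlm. case ytlm of (y, t, lam, mu) \<Rightarrow>
                  ereal ((\<Sum>i=1..n. a i * y i) + lam * b + mu * real k + (\<Sum>i=1..n. t i))"
  let ?f = "\<lambda>y. ereal ((\<Sum>i=1..n. a i * y i) + sqrt (b * s_val n k d y))"
  have e2: "(INF y\<in>Y. ?f y) = (INF ytlm\<in>?G. ?g ytlm)"
  proof (rule antisym)
    show "(INF y\<in>Y. ?f y) \<le> (INF ytlm\<in>?G. ?g ytlm)"
    proof (rule INF_greatest)
      fix ytlm assume "ytlm \<in> ?G"
      then obtain y t lam mu where yt: "ytlm = (y, t, lam, mu)" "y \<in> Y" "\<forall>i\<in>{1..n}. t i \<ge> 0"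
        "lam \<ge> 0" "mu \<ge> 0" "\<forall>i\<in>{1..n}. (y i / d i)\<^sup>2 \<le> 4 * (t i + mu) * lam" by auto
      have "sqrt (b * s_val n k d y) \<le> lam * b + mu * real k + (\<Sum>i=1..n. t i)"
        using dual_lb[OF A yt(3-6)] .
      then have "?f y \<le> ?g ytlm" using yt(1) by simp
      then show "(INF y\<in>Y. ?f y) \<le> ?g ytlm" by (rule INF_lower2[OF yt(2)])
    qed
    show "(INF ytlm\<in>?G. ?g ytlm) \<le> (INF y\<in>Y. ?f y)"
    proof (rule INF_greatest)
      fix y assume y: "y \<in> Y"
      obtain t lam mu where tl: "\<forall>i\<in>{1..n}. t i \<ge> 0" "lam \<ge> 0" "mu \<ge> 0"
        "\<forall>i\<in>{1..n}. (y i / d i)\<^sup>2 \<le> 4 * (t i + mu) * lam"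
        "lam * b + mu * real k + (\<Sum>i=1..n. t i) = sqrt (b * s_val n k d y)"
        using dual_att[OF A, of y] by blast
      have mem: "(y, t, lam, mu) \<in> ?G" using y tl by auto
      have "(INF ytlm\<in>?G. ?g ytlm) \<le> ?g (y, t, lam, mu)" by (rule INF_lower[OF mem])
      also have "?g (y, t, lam, mu) = ?f y" using tl(5) by (simp add: algebra_simps)
      finally show "(INF ytlm\<in>?G. ?g ytlm) \<le> ?f y" .
    qed
  qed
  show ?thesis using e1 e2 by simp
qed

end
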